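(* Let $n$ be a positive integer and let $x,y,z$ be complex numbers with $x+y+z=1$. Then $$\sum_{k=0}^n\binom{n+1}k\left((-1)^nB_k(x)-B_k(y)\right)E_{n-k}(z)=\frac{n+1}2\sum_{l=0}^{n-1}(-1)^lE_l(x)E_{n-1-l}(y),$$ $$\sum_{k=1}^n\binom nk\frac{B_k(x)}kE_{n-k}(z)-\sum_{k=1}^n(-1)^k\frac{B_k(y)}kE_{n-k}(z)=\frac{(-1)^n}2\sum_{l=0}^{n-1}\binom nlE_l(y)E_{n-1-l}(x)-H_nE_n(z),$$ and $$(-1)^n\sum_{k=0}^n\binom{n+1}kB_{n-k}(x)B_k(y)+\sum_{k=0}^{n-1}\binom {n+1}k\frac{B_{n-k}(x)}{n-k}B_k(z)=(n+1)\sum_{k=1}^n(-1)^k\frac{B_k(y)}kB_{n-k}(z)+(1-H_n)(n+1)B_n(z).$$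
   Context: $H_n=1+\frac12+\cdots+\frac1n$. Bernoulli numbers are defined by $B_0=1$ and $\sum_{k=0}^n\binom{n+1}kB_k=0$ for $n\ge1$; Euler numbers by $E_0=1$ and $\sum_{0\le k\le n,\,2\mid n-k}\binom nkE_k=0$ for $n\ge1$. The Bernoulli polynomials are $B_n(x)=\sum_{k=0}^n\binom nkB_kx^{n-k}$ and the Euler polynomials are $E_n(x)=\sum_{k=0}^n\binom nk\frac{E_k}{2^k}(x-\frac12)^{n-k}$. *)

theory Defs
  imports "HOL-Analysis.Analysis"
begin

text \<open>Bernoulli numbers: B_0 = 1 and sum_{k=0}^n binom(n+1,k) B_k = 0 for n >= 1,
  i.e. B_n = -(1/(n+1)) sum_{k<n} binom(n+1,k) B_k.\<close>
function bern :: "nat \<Rightarrow> complex" where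
  "bern n = (if n = 0 then 1
     else - (\<Sum>k<n. of_nat ((n + 1) choose k) * bern k) / of_nat (n + 1))"
  by auto
termination by (relation "Wellfounded.measure id") auto

declare bern.simps [simp del]

function eul :: "nat \<Rightarrow> complex" where
  "eul n = (if n = 0 then 1
     else - (\<Sum>k\<in>{k. k < n \<and> even (n - k)}. of_nat (n choose k) * eul k))"
  by auto
termination by (relation "Wellfounded.measure id") auto

declare eul.simps [simp del]

definition bernpoly :: "nat \<Rightarrow> complex \<Rightarrow> complex" where
  "bernpoly n x = (\<Sum>k\<le>n. of_nat (n choose k) * bern k * x ^ (n - k))"

definition eulpoly :: "nat \<Rightarrow> complex \<Rightarrow> complex" where
  "eulpoly n x = (\<Sum>k\<le>n. of_nat (n choose k) * (eul k / 2 ^ k) * (x - 1/2) ^ (n - k))"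

end

theory Submission
  imports Defs
begin


lemma appell_deriv:
  fixes a :: "nat \<Rightarrow> complex" and c :: complex
  shows "((\<lambda>x. \<Sum>k\<le>m. of_nat (m choose k) * a k * (x - c)^(m-k)) has_field_derivative
     (of_nat m * (\<Sum>k\<le>m-1. of_nat ((m-1) choose k) * a k * (x - c)^(m-1-k)))) (at x)"
proof -
  have D: "((\<lambda>x. \<Sum>k\<le>m. of_nat (m choose k) * a k * (x - c)^(m-k)) has_field_derivative
     (\<Sum>k\<le>m. of_nat (m choose k) * a k * (of_nat (m-k) * (x - c)^(m-k-1)))) (at x)"
    by (rule DERIV_sum) (auto intro!: derivative_eq_intros)
  have E: "(\<Sum>k\<le>m. of_nat (m choose k) * a k * (of_nat (m-k) * (x - c)^(m-k-1)))
      = of_nat m * (\<Sum>k\<le>m-1. of_nat ((m-1) choose k) * a k * (x - c)^(m-1-k))"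
  proof (cases m)
    case 0 then show ?thesis by simp
  next
    case (Suc m')
    have "(\<Sum>k\<le>m. of_nat (m choose k) * a k * (of_nat (m-k) * (x - c)^(m-k-1)))
        = (\<Sum>k\<le>m'. of_nat (m choose k) * a k * (of_nat (m-k) * (x - c)^(m-k-1)))"
      using Suc by (simp add: sum.atMost_Suc)
    also have "\<dots> = (\<Sum>k\<le>m'. of_nat m * (of_nat (m' choose k) * a k * (x - c)^(m'-k)))"
    proof (rule sum.cong[OF refl])
      fix k assume k: "k \<in> {..m'}"
      have "of_nat (m choose k) * (of_nat (m-k) :: complex) = of_nat ((m - k) * (m choose k))" by simp
      also have "(m - k) * (m choose k) = m * (m' choose k)"
        using binomial_absorb_comp[of m k] Suc by simp
      finally have *: "of_nat (m choose k) * (of_nat (m-k) :: complex) = of_nat m * of_nat (m' choose k)" by simp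
      have **: "m - k - 1 = m' - k" using Suc by simp
      show "of_nat (m choose k) * a k * (of_nat (m-k) * (x - c)^(m-k-1)) = of_nat m * (of_nat (m' choose k) * a k * (x - c)^(m'-k))"
        using * ** by (metis (no_types, lifting) mult.assoc mult.left_commute)
    qed
    also have "\<dots> = of_nat m * (\<Sum>k\<le>m-1. of_nat ((m-1) choose k) * a k * (x - c)^(m-1-k))"
      using Suc by (simp add: sum_distrib_left)
    finally show ?thesis .
  qed
  show ?thesis using D E by simp
qed

lemma bernpoly_deriv: "((bernpoly m) has_field_derivative (of_nat m * bernpoly (m-1) x)) (at x)"
proof -
  have "bernpoly m = (\<lambda>x. \<Sum>k\<le>m. of_nat (m choose k) * bern k * (x - 0)^(m-k))"
    by (auto simp: bernpoly_def fun_eq_iff)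
  moreover have "bernpoly (m-1) x = (\<Sum>k\<le>m-1. of_nat ((m-1) choose k) * bern k * (x - 0)^(m-1-k))"
    by (simp add: bernpoly_def)
  ultimately show ?thesis using appell_deriv[of m bern 0 x] by simp
qed

lemma eulpoly_deriv: "((eulpoly m) has_field_derivative (of_nat m * eulpoly (m-1) x)) (at x)"
proof -
  have "eulpoly m = (\<lambda>x. \<Sum>k\<le>m. of_nat (m choose k) * (eul k / 2^k) * (x - 1/2)^(m-k))"
    by (auto simp: eulpoly_def fun_eq_iff)
  moreover have "eulpoly (m-1) x = (\<Sum>k\<le>m-1. of_nat ((m-1) choose k) * (eul k / 2^k) * (x - 1/2)^(m-1-k))"
    by (simp add: eulpoly_def)
  ultimately show ?thesis using appell_deriv[of m "\<lambda>k. eul k / 2^k" "1/2" x] by simp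
qed



definition appell :: "(nat \<Rightarrow> complex \<Rightarrow> complex) \<Rightarrow> bool" where
  "appell P \<longleftrightarrow> (\<forall>m x. (P m has_field_derivative (of_nat m * P (m-1) x)) (at x))"

lemma appell_bern: "appell bernpoly"
  using bernpoly_deriv by (simp add: appell_def)

lemma appell_eul: "appell eulpoly"
  using eulpoly_deriv by (simp add: appell_def)

lemma appell_chain:
  assumes "appell P" "(u has_field_derivative du) (at y)"
  shows "((\<lambda>y. P m (u y)) has_field_derivative (of_nat m * P (m-1) (u y) * du)) (at y)"
  using DERIV_chain2[of "P m" "of_nat m * P (m-1) (u y)" u y du UNIV] assms
  by (simp add: appell_def)

definition SS :: "(nat \<Rightarrow> complex \<Rightarrow> complex) \<Rightarrow> (nat \<Rightarrow> complex \<Rightarrow> complex) \<Rightarrow> nat \<Rightarrow> complex \<Rightarrow> complex \<Rightarrow> complex \<Rightarrow> complex \<Rightarrow> complex" where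
  "SS P Q n a b u v = (\<Sum>k\<le>n. (-1)^k * (a gchoose k) * (b gchoose (n-k)) * P (n-k) u * Q k v)"

lemma SS_A:
  "(\<Sum>k\<le>Suc m. (-1)^k * (a gchoose k) * (b gchoose (Suc m - k)) * (of_nat (Suc m - k) * P (Suc m - k - 1) u) * Q k v)
   = b * SS P Q m a (b-1) u v"
proof -
  have "(\<Sum>k\<le>Suc m. (-1)^k * (a gchoose k) * (b gchoose (Suc m - k)) * (of_nat (Suc m - k) * P (Suc m - k - 1) u) * Q k v)
      = (\<Sum>k\<le>m. (-1)^k * (a gchoose k) * (b gchoose (Suc m - k)) * (of_nat (Suc m - k) * P (Suc m - k - 1) u) * Q k v)"
    by (simp add: sum.atMost_Suc)
  also have "\<dots> = (\<Sum>k\<le>m. b * ((-1)^k * (a gchoose k) * ((b - 1) gchoose (m - k)) * P (m - k) u * Q k v))"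
  proof (rule sum.cong[OF refl])
    fix k assume "k \<in> {..m}"
    then have k: "k \<le> m" by simp
    then have e: "Suc m - k = Suc (m - k)" by simp
    have "of_nat (Suc (m - k)) * (b gchoose Suc (m - k)) = b * ((b - 1) gchoose (m - k))"
      by (rule gbinomial_absorption)
    note h = this
    have "(-1)^k * (a gchoose k) * (b gchoose (Suc m - k)) * (of_nat (Suc m - k) * P (Suc m - k - 1) u) * Q k v
        = (-1)^k * (a gchoose k) * (of_nat (Suc (m - k)) * (b gchoose Suc (m - k))) * P (m - k) u * Q k v"
      by (simp only: e diff_Suc_1 ac_simps)
    also have "\<dots> = b * ((-1)^k * (a gchoose k) * ((b - 1) gchoose (m - k)) * P (m - k) u * Q k v)"
      by (simp only: h ac_simps)
    finally show "(-1)^k * (a gchoose k) * (b gchoose (Suc m - k)) * (of_nat (Suc m - k) * P (Suc m - k - 1) u) * Q k v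
        = b * ((-1)^k * (a gchoose k) * ((b - 1) gchoose (m - k)) * P (m - k) u * Q k v)" .
  qed
  also have "\<dots> = b * SS P Q m a (b-1) u v"
    by (simp add: SS_def sum_distrib_left)
  finally show ?thesis .
qed

lemma SS_B:
  "(\<Sum>k\<le>Suc m. (-1)^k * (a gchoose k) * (b gchoose (Suc m - k)) * P (Suc m - k) u * (of_nat k * Q (k - 1) v))
   = - a * SS P Q m (a-1) b u v"
proof -
  have "(\<Sum>k\<le>Suc m. (-1)^k * (a gchoose k) * (b gchoose (Suc m - k)) * P (Suc m - k) u * (of_nat k * Q (k - 1) v))
      = (\<Sum>j\<le>m. (-1)^(Suc j) * (a gchoose Suc j) * (b gchoose (Suc m - Suc j)) * P (Suc m - Suc j) u * (of_nat (Suc j) * Q j v))"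
    by (subst sum.atMost_Suc_shift) simp
  also have "\<dots> = (\<Sum>j\<le>m. - a * ((-1)^j * ((a - 1) gchoose j) * (b gchoose (m - j)) * P (m - j) u * Q j v))"
  proof (rule sum.cong[OF refl])
    fix j assume "j \<in> {..m}"
    have "of_nat (Suc j) * (a gchoose Suc j) = a * ((a - 1) gchoose j)"
      by (rule gbinomial_absorption)
    note h = this
    have "(-1)^(Suc j) * (a gchoose Suc j) * (b gchoose (Suc m - Suc j)) * P (Suc m - Suc j) u * (of_nat (Suc j) * Q j v)
        = - ((-1)^j * (of_nat (Suc j) * (a gchoose Suc j)) * (b gchoose (m - j)) * P (m - j) u * Q j v)"
    proof -
      have g: "\<And>X Y Z N W. (-1::complex)^(Suc j) * X * Y * Z * (N * W) = - ((-1)^j * (N * X) * Y * Z * W)"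
        by (simp add: algebra_simps)
      show ?thesis unfolding diff_Suc_Suc by (rule g)
    qed
    also have "\<dots> = - a * ((-1)^j * ((a - 1) gchoose j) * (b gchoose (m - j)) * P (m - j) u * Q j v)"
      by (simp only: h mult_minus_left ac_simps)
    finally show "(-1)^(Suc j) * (a gchoose Suc j) * (b gchoose (Suc m - Suc j)) * P (Suc m - Suc j) u * (of_nat (Suc j) * Q j v)
        = - a * ((-1)^j * ((a - 1) gchoose j) * (b gchoose (m - j)) * P (m - j) u * Q j v)" .
  qed
  also have "\<dots> = - a * SS P Q m (a-1) b u v"
    by (simp add: SS_def sum_distrib_left)
  finally show ?thesis .
qed

lemma SS_deriv:
  assumes P: "appell P" and Q: "appell Q"
    and u: "(u has_field_derivative du) (at y)" and v: "(v has_field_derivative dv) (at y)"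
  shows "((\<lambda>y. SS P Q (Suc m) a b (u y) (v y)) has_field_derivative
     (du * b * SS P Q m a (b-1) (u y) (v y) - dv * a * SS P Q m (a-1) b (u y) (v y))) (at y)"
proof -
  have PQ: "((\<lambda>y. P (Suc m - k) (u y) * Q k (v y)) has_field_derivative
        ((of_nat (Suc m - k) * P (Suc m - k - 1) (u y) * du) * Q k (v y) +
         P (Suc m - k) (u y) * (of_nat k * Q (k - 1) (v y) * dv))) (at y)" for k
    by (rule DERIV_cong[OF DERIV_mult'[OF appell_chain[OF P u] appell_chain[OF Q v]]]) (simp add: algebra_simps)
  have D0: "((\<lambda>y. \<Sum>k\<le>Suc m. ((-1)^k * (a gchoose k) * (b gchoose (Suc m - k))) * (P (Suc m - k) (u y) * Q k (v y))) has_field_derivative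
     (\<Sum>k\<le>Suc m. ((-1)^k * (a gchoose k) * (b gchoose (Suc m - k))) *
        ((of_nat (Suc m - k) * P (Suc m - k - 1) (u y) * du) * Q k (v y) +
         P (Suc m - k) (u y) * (of_nat k * Q (k - 1) (v y) * dv)))) (at y)"
    by (rule DERIV_sum) (rule DERIV_cmult[OF PQ])
  have D: "((\<lambda>y. SS P Q (Suc m) a b (u y) (v y)) has_field_derivative
     (\<Sum>k\<le>Suc m. (-1)^k * (a gchoose k) * (b gchoose (Suc m - k)) *
        ((of_nat (Suc m - k) * P (Suc m - k - 1) (u y) * du) * Q k (v y) +
         P (Suc m - k) (u y) * (of_nat k * Q (k - 1) (v y) * dv)))) (at y)"
    using D0 unfolding SS_def by (simp only: mult.assoc)
  have "(\<Sum>k\<le>Suc m. (-1)^k * (a gchoose k) * (b gchoose (Suc m - k)) *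
        ((of_nat (Suc m - k) * P (Suc m - k - 1) (u y) * du) * Q k (v y) +
         P (Suc m - k) (u y) * (of_nat k * Q (k - 1) (v y) * dv)))
      = du * (\<Sum>k\<le>Suc m. (-1)^k * (a gchoose k) * (b gchoose (Suc m - k)) * (of_nat (Suc m - k) * P (Suc m - k - 1) (u y)) * Q k (v y))
        + dv * (\<Sum>k\<le>Suc m. (-1)^k * (a gchoose k) * (b gchoose (Suc m - k)) * P (Suc m - k) (u y) * (of_nat k * Q (k - 1) (v y)))"
    by (simp add: sum_distrib_left sum.distrib[symmetric] algebra_simps)
  also have "\<dots> = du * b * SS P Q m a (b-1) (u y) (v y) - dv * a * SS P Q m (a-1) b (u y) (v y)"
    unfolding SS_A SS_B by (simp add: algebra_simps)
  finally show ?thesis using D by simp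
qed

lemma SS_pascal:
  "a * SS P Q m (a-1) b u v + b * SS P Q m a (b-1) u v = (a + b - of_nat m) * SS P Q m a b u v"
proof -
  have "a * SS P Q m (a-1) b u v + b * SS P Q m a (b-1) u v =
     (\<Sum>k\<le>m. (-1)^k * (a * ((a-1) gchoose k)) * (b gchoose (m-k)) * P (m-k) u * Q k v
           + (-1)^k * (a gchoose k) * (b * ((b-1) gchoose (m-k))) * P (m-k) u * Q k v)"
    by (simp add: SS_def sum_distrib_left sum.distrib algebra_simps)
  also have "\<dots> = (\<Sum>k\<le>m. (a + b - of_nat m) * ((-1)^k * (a gchoose k) * (b gchoose (m-k)) * P (m-k) u * Q k v))"
  proof (rule sum.cong[OF refl])
    fix k assume "k \<in> {..m}"
    then have k: "k \<le> m" by simp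
    have 1: "a * ((a-1) gchoose k) = (a - of_nat k) * (a gchoose k)"
      by (simp add: gbinomial_absorb_comp)
    have 2: "b * ((b-1) gchoose (m-k)) = (b - of_nat (m-k)) * (b gchoose (m-k))"
      by (simp add: gbinomial_absorb_comp)
    have 3: "(of_nat (m-k) :: complex) = of_nat m - of_nat k" using k by (simp add: of_nat_diff)
    show "(-1)^k * (a * ((a-1) gchoose k)) * (b gchoose (m-k)) * P (m-k) u * Q k v
           + (-1)^k * (a gchoose k) * (b * ((b-1) gchoose (m-k))) * P (m-k) u * Q k v
        = (a + b - of_nat m) * ((-1)^k * (a gchoose k) * (b gchoose (m-k)) * P (m-k) u * Q k v)"
      unfolding 1 2 3 by (simp add: algebra_simps)
  qed
  also have "\<dots> = (a + b - of_nat m) * SS P Q m a b u v"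
    by (simp add: SS_def sum_distrib_left)
  finally show ?thesis .
qed

lemma deriv_slope:
  fixes g :: "complex \<Rightarrow> complex"
  assumes "\<And>x. (g has_field_derivative K) (at x)"
  shows "g b - g a = K * (b - a)"
proof -
  have "\<exists>c. \<forall>x\<in>UNIV. g x - K * x = c"
    apply (rule has_field_derivative_zero_constant)
     apply simp
    using assms by (auto intro!: derivative_eq_intros)
  then obtain c where "\<And>x. g x - K * x = c" by blast
  from this[of a] this[of b] show ?thesis by (simp add: algebra_simps)
qed



lemma bern_0: "bern 0 = 1"
  by (subst bern.simps) simp

lemma bern_1: "bern 1 = -1/2"
proof -
  have "bern (Suc 0) = - (\<Sum>k<Suc 0. of_nat (2 choose k) * bern k) / of_nat 2"
    by (subst bern.simps) simp
  also have "\<dots> = -1/2" by (simp add: bern_0)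
  finally show ?thesis by simp
qed

lemma bern_rec:
  assumes "2 \<le> m"
  shows "(\<Sum>k<m. of_nat (m choose k) * bern k) = 0"
proof -
  obtain i where m: "m = Suc (Suc i)" using assms by (metis add_2_eq_Suc le_Suc_ex)
  have b: "bern (Suc i) = - (\<Sum>k<Suc i. of_nat ((Suc i + 1) choose k) * bern k) / of_nat (Suc i + 1)"
    by (subst bern.simps) simp
  have "(\<Sum>k<m. of_nat (m choose k) * bern k)
      = (\<Sum>k<Suc i. of_nat ((Suc i + 1) choose k) * bern k) + of_nat (Suc i + 1) * bern (Suc i)"
    using m by simp
  also have "\<dots> = 0"
    unfolding b by (simp add: field_simps del: of_nat_Suc)
  finally show ?thesis .
qed

lemma bernpoly_at0: "bernpoly j 0 = bern j"
proof -
  have "bernpoly j 0 = (\<Sum>k\<le>j. if k = j then bern j else 0)"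
    unfolding bernpoly_def by (rule sum.cong) auto
  then show ?thesis by simp
qed

lemma bern_Suc0: "bern (Suc 0) = -1/2"
  using bern_1 by simp

lemma bernpoly_0: "bernpoly 0 x = 1"
  by (simp add: bernpoly_def bern_0)

lemma bernpoly_1: "bernpoly 1 x = x - 1/2"
  by (simp add: bernpoly_def bern_0 bern_1 bern_Suc0)

lemma bernpoly_at1: "bernpoly j 1 = bern j + (if j = 1 then 1 else 0)"
proof (cases "2 \<le> j")
  case True
  have "bernpoly j 1 = (\<Sum>k<j. of_nat (j choose k) * bern k) + bern j"
    unfolding bernpoly_def by (simp add: lessThan_Suc_atMost[symmetric])
  then show ?thesis using bern_rec[OF True] True by simp
next
  case False
  then have "j = 0 \<or> j = 1" by auto
  then show ?thesis
    by (auto simp: bernpoly_def bern_0 bern_1 bern_Suc0)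
qed

lemma deriv_const:
  fixes g :: "complex \<Rightarrow> complex"
  assumes "\<And>x. (g has_field_derivative 0) (at x)"
  shows "g b = g a"
  using deriv_slope[of g 0 b a] assms by simp

definition brefl :: "nat \<Rightarrow> complex \<Rightarrow> complex" where
  "brefl j x = bernpoly j (1 - x) - (-1)^j * bernpoly j x"

lemma brefl_deriv: "(brefl (Suc j) has_field_derivative (- of_nat (Suc j) * brefl j x)) (at x)"
proof -
  have u: "((\<lambda>x. 1 - x) has_field_derivative -1) (at x)"
    by (auto intro!: derivative_eq_intros)
  have 1: "((\<lambda>x. bernpoly (Suc j) (1 - x)) has_field_derivative (of_nat (Suc j) * bernpoly j (1 - x) * -1)) (at x)"
    using appell_chain[OF appell_bern u, of "Suc j"] by simp
  have 2: "((\<lambda>x. (-1)^(Suc j) * bernpoly (Suc j) x) has_field_derivative ((-1)^(Suc j) * (of_nat (Suc j) * bernpoly j x))) (at x)"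
    using DERIV_cmult[OF bernpoly_deriv[of "Suc j" x], of "(-1)^(Suc j)"] by simp
  have "brefl (Suc j) = (\<lambda>x. bernpoly (Suc j) (1 - x) - (-1)^(Suc j) * bernpoly (Suc j) x)"
    by (simp add: brefl_def fun_eq_iff)
  then show ?thesis
    using DERIV_diff[OF 1 2] by (simp add: brefl_def algebra_simps)
qed

lemma brefl_zero: "brefl j x = 0"
proof (induction j arbitrary: x)
  case 0
  then show ?case by (simp add: brefl_def bernpoly_0)
next
  case (Suc j)
  have c: "brefl (Suc j) y = brefl (Suc j) 0" for y
    by (rule deriv_const) (use brefl_deriv[of j] Suc in simp)
  have "brefl (Suc (Suc j)) 1 - brefl (Suc (Suc j)) 0 = (- of_nat (Suc (Suc j)) * brefl (Suc j) 0) * (1 - 0)"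
    by (rule deriv_slope) (subst c[symmetric], rule brefl_deriv)
  moreover have "brefl (Suc (Suc j)) 1 - brefl (Suc (Suc j)) 0 = 0"
    by (simp add: brefl_def bernpoly_at0 bernpoly_at1)
  ultimately have "brefl (Suc j) 0 = 0" by (simp del: of_nat_Suc)
  then show ?case using c by simp
qed

lemma bernpoly_refl: "bernpoly j (1 - x) = (-1)^j * bernpoly j x"
  using brefl_zero[of j x] by (simp add: brefl_def)

lemma bern_odd:
  assumes "2 \<le> j"
  shows "bern j * ((-1)^j - 1) = 0"
proof -
  have "bernpoly j (1 - 0) = (-1)^j * bernpoly j 0" by (rule bernpoly_refl)
  then have "bern j = (-1)^j * bern j" using assms by (simp add: bernpoly_at0 bernpoly_at1)
  then show ?thesis by (simp add: algebra_simps)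
qed



lemma eul_0: "eul 0 = 1"
  by (subst eul.simps) simp

lemma eul_odd: "odd n \<Longrightarrow> eul n = 0"
proof (induction n rule: less_induct)
  case (less n)
  then have n0: "n \<noteq> 0" by (intro notI) simp
  have "(\<Sum>k\<in>{k. k < n \<and> even (n - k)}. of_nat (n choose k) * eul k) = 0"
  proof (rule sum.neutral, safe)
    fix k assume k: "k < n" "even (n - k)"
    then have "odd k" using less.prems by (metis dvd_diff_nat even_add le_add_diff_inverse2 less_imp_le_nat)
    then have "eul k = 0" using less.IH k by blast
    then show "of_nat (n choose k) * eul k = 0" by simp
  qed
  then show ?case using n0 by (subst eul.simps) simp
qed

lemma eul_rec:
  assumes "1 \<le> m"
  shows "(\<Sum>k\<le>m. if even (m - k) then of_nat (m choose k) * eul k else 0) = 0"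
proof -
  have s: "{k. k < m \<and> even (m - k)} = {k\<in>{..<m}. even (m - k)}" by auto
  have e: "eul m = - (\<Sum>k\<in>{k. k < m \<and> even (m - k)}. of_nat (m choose k) * eul k)"
    using assms by (subst eul.simps) simp
  have "(\<Sum>k\<le>m. if even (m - k) then of_nat (m choose k) * eul k else 0)
     = (\<Sum>k<m. if even (m - k) then of_nat (m choose k) * eul k else 0) + eul m"
    by (simp add: lessThan_Suc_atMost[symmetric])
  also have "(\<Sum>k<m. if even (m - k) then of_nat (m choose k) * eul k else 0)
      = (\<Sum>k\<in>{k. k < m \<and> even (m - k)}. of_nat (m choose k) * eul k)"
    unfolding s by (simp only: sum.inter_filter[OF finite_lessThan])
  finally show ?thesis using e by simp
qed

lemma eulpoly_0: "eulpoly 0 x = 1"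
  by (simp add: eulpoly_def eul_0)

lemma eulpoly_1: "eulpoly 1 x = x - 1/2"
proof -
  have "eul 1 = 0" by (rule eul_odd) simp
  then show ?thesis by (simp add: eulpoly_def eul_0)
qed

lemma eulpoly_sum01: "eulpoly m 1 + eulpoly m 0 = (if m = 0 then 2 else 0)"
proof -
  have "eulpoly m 1 + eulpoly m 0 =
      (\<Sum>k\<le>m. 2 / 2^m * (if even (m - k) then of_nat (m choose k) * eul k else 0))"
    unfolding eulpoly_def sum.distrib[symmetric]
  proof (rule sum.cong[OF refl])
    fix k assume "k \<in> {..m}"
    then have k: "k \<le> m" by simp
    have p: "(2::complex)^k * 2^(m-k) = 2^m" using k by (simp add: power_add[symmetric])
    have h: "(1 - 1/2 :: complex)^(m-k) + (0 - 1/2)^(m-k) = (if even (m-k) then 2 / 2^(m-k) else 0)"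
      by (cases "even (m-k)") (simp_all add: power_divide)
    show "of_nat (m choose k) * (eul k / 2 ^ k) * (1 - 1 / 2) ^ (m - k) +
          of_nat (m choose k) * (eul k / 2 ^ k) * (0 - 1 / 2) ^ (m - k)
        = 2 / 2^m * (if even (m - k) then of_nat (m choose k) * eul k else 0)"
    proof (cases "even (m-k)")
      case True
      have "of_nat (m choose k) * (eul k / 2 ^ k) * (1 - 1 / 2) ^ (m - k) +
          of_nat (m choose k) * (eul k / 2 ^ k) * (0 - 1 / 2) ^ (m - k)
          = of_nat (m choose k) * (eul k / 2 ^ k) * (2 / 2^(m-k))"
        using h True by (simp only: distrib_left[symmetric] if_True)
      also have "\<dots> = 2 / (2^k * 2^(m-k)) * (of_nat (m choose k) * eul k)"
        by simp
      finally show ?thesis unfolding p using True by simp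
    next
      case False
      have "of_nat (m choose k) * (eul k / 2 ^ k) * (1 - 1 / 2) ^ (m - k) +
          of_nat (m choose k) * (eul k / 2 ^ k) * (0 - 1 / 2) ^ (m - k) = 0"
        using h False by (simp only: distrib_left[symmetric] if_False mult_zero_right)
      then show ?thesis using False by simp
    qed
  qed
  also have "\<dots> = 2 / 2^m * (\<Sum>k\<le>m. if even (m - k) then of_nat (m choose k) * eul k else 0)"
    by (simp add: sum_distrib_left)
  also have "\<dots> = (if m = 0 then 2 else 0)"
    using eul_rec[of m] by (cases "m = 0") (simp_all add: eul_0)
  finally show ?thesis .
qed

lemma eulpoly_refl: "eulpoly m (1 - x) = (-1)^m * eulpoly m x"
  unfolding eulpoly_def sum_distrib_left
proof (rule sum.cong[OF refl])
  fix k assume "k \<in> {..m}"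
  then have k: "k \<le> m" by simp
  show "of_nat (m choose k) * (eul k / 2 ^ k) * (1 - x - 1 / 2) ^ (m - k) =
        (- 1) ^ m * (of_nat (m choose k) * (eul k / 2 ^ k) * (x - 1 / 2) ^ (m - k))"
  proof (cases "even k")
    case True
    have "(-1::complex)^m = (-1)^(m-k) * (-1)^k" using k by (simp add: power_add[symmetric])
    also have "\<dots> = (-1)^(m-k)" using True by simp
    finally have s: "(-1::complex)^(m-k) = (-1)^m" by simp
    have t: "(1 - x - 1/2 :: complex) = (-1) * (x - 1/2)" by simp
    have u: "(1 - x - 1/2 :: complex)^(m-k) = (-1)^(m-k) * (x - 1/2)^(m-k)"
      unfolding t by (rule power_mult_distrib)
    show ?thesis unfolding u s by (simp only: ac_simps)
  next
    case False
    then show ?thesis using eul_odd[of k] by simp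
  qed
qed

lemma eulpoly_at0: "1 \<le> m \<Longrightarrow> eulpoly m 0 * (1 + (-1)^m) = 0"
  using eulpoly_refl[of m 0] eulpoly_sum01[of m] by (simp add: algebra_simps)



abbreviation "SB \<equiv> SS bernpoly bernpoly"

definition SP :: "nat \<Rightarrow> complex \<Rightarrow> complex \<Rightarrow> complex \<Rightarrow> complex \<Rightarrow> complex \<Rightarrow> complex \<Rightarrow> complex" where
  "SP n r s t x y z = r * SB n s t x y + s * SB n t r y z + t * SB n r s z x"

lemma SP_rot: "SP n r s t x y z = SP n s t r y z x"
  by (simp add: SP_def algebra_simps)

lemma SS_0: "SS P Q 0 a b u v = P 0 u * Q 0 v"
  by (simp add: SS_def)

lemma SP_dy:
  assumes "r + s + t = of_nat (Suc m)"
  shows "((\<lambda>y. SP (Suc m) r s t x y (1 - x - y)) has_field_derivative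
           (- s * SP m r (s-1) t x y (1 - x - y))) (at y)"
proof -
  have c: "((\<lambda>y. x) has_field_derivative 0) (at y)" for x :: complex by (rule DERIV_const)
  have i: "((\<lambda>y. y) has_field_derivative 1) (at y)" by (rule DERIV_ident)
  have z: "((\<lambda>y. 1 - x - y) has_field_derivative -1) (at y)" by (auto intro!: derivative_eq_intros)
  note d1 = SS_deriv[OF appell_bern appell_bern c i, of m s t]
  note d2 = SS_deriv[OF appell_bern appell_bern i z, of m t r]
  note d3 = SS_deriv[OF appell_bern appell_bern z c, of m r s]
  have D: "((\<lambda>y. SP (Suc m) r s t x y (1 - x - y)) has_field_derivative
     (r * (0 * t * SB m s (t-1) x y - 1 * s * SB m (s-1) t x y)
      + s * (1 * r * SB m t (r-1) y (1-x-y) - (-1) * t * SB m (t-1) r y (1-x-y))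
      + t * ((-1) * s * SB m r (s-1) (1-x-y) x - 0 * r * SB m (r-1) s (1-x-y) x))) (at y)"
    unfolding SP_def
    by (intro DERIV_add DERIV_cmult d1 d2 d3)
  have p: "t * SB m (t-1) r y (1-x-y) + r * SB m t (r-1) y (1-x-y) = (t + r - of_nat m) * SB m t r y (1-x-y)"
    by (rule SS_pascal)
  have e: "t + r - of_nat m = 1 - s" using assms by (simp add: algebra_simps)
  have "r * (0 * t * SB m s (t-1) x y - 1 * s * SB m (s-1) t x y)
      + s * (1 * r * SB m t (r-1) y (1-x-y) - (-1) * t * SB m (t-1) r y (1-x-y))
      + t * ((-1) * s * SB m r (s-1) (1-x-y) x - 0 * r * SB m (r-1) s (1-x-y) x)
    = - s * (r * SB m (s-1) t x y + t * SB m r (s-1) (1-x-y) x)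
      + s * (t * SB m (t-1) r y (1-x-y) + r * SB m t (r-1) y (1-x-y))"
    by (simp add: algebra_simps)
  also have "\<dots> = - s * SP m r (s-1) t x y (1 - x - y)"
    unfolding p e SP_def by (simp add: algebra_simps)
  finally show ?thesis using D by simp
qed

lemma sum_single_Suc:
  fixes f :: "nat \<Rightarrow> complex"
  shows "(\<Sum>k\<le>Suc j. if Suc j - k = 1 then f k else 0) = f j"
proof -
  have "(\<Sum>k\<le>Suc j. if Suc j - k = 1 then f k else 0) = (\<Sum>k\<le>Suc j. if k = j then f k else 0)"
    by (rule sum.cong) auto
  then show ?thesis by simp
qed

lemma sum_single_1:
  fixes f :: "nat \<Rightarrow> complex"
  shows "(\<Sum>k\<le>Suc j. if k = 1 then f k else 0) = f 1"
  by simp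

lemma SB_10:
  "SB (Suc j) a b 1 0 = SB (Suc j) a b 0 0 + (-1)^j * (a gchoose j) * b * bern j"
proof -
  have "SB (Suc j) a b 1 0 = (\<Sum>k\<le>Suc j. (-1)^k * (a gchoose k) * (b gchoose (Suc j - k)) * bernpoly (Suc j - k) 0 * bernpoly k 0
        + (if Suc j - k = 1 then (-1)^k * (a gchoose k) * (b gchoose (Suc j - k)) * bernpoly k 0 else 0))"
    unfolding SS_def by (rule sum.cong) (auto simp: bernpoly_at0 bernpoly_at1 algebra_simps)
  also have "\<dots> = SB (Suc j) a b 0 0 + (-1)^j * (a gchoose j) * (b gchoose (Suc j - j)) * bernpoly j 0"
    unfolding sum.distrib sum_single_Suc SS_def ..
  finally show ?thesis by (simp add: bernpoly_at0)
qed

lemma SB_01: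
  "SB (Suc j) a b 0 1 = SB (Suc j) a b 0 0 - a * (b gchoose j) * bern j"
proof -
  have "SB (Suc j) a b 0 1 = (\<Sum>k\<le>Suc j. (-1)^k * (a gchoose k) * (b gchoose (Suc j - k)) * bernpoly (Suc j - k) 0 * bernpoly k 0
        + (if k = 1 then (-1)^k * (a gchoose k) * (b gchoose (Suc j - k)) * bernpoly (Suc j - k) 0 else 0))"
    unfolding SS_def by (rule sum.cong) (auto simp: bernpoly_at0 bernpoly_at1 algebra_simps)
  also have "\<dots> = SB (Suc j) a b 0 0 + (-1)^1 * (a gchoose 1) * (b gchoose (Suc j - 1)) * bernpoly (Suc j - 1) 0"
    unfolding sum.distrib sum_single_1 SS_def ..
  finally show ?thesis by (simp add: bernpoly_at0)
qed

lemma SP_diff01: "SP (Suc (Suc m)) r s t 0 1 0 - SP (Suc (Suc m)) r s t 0 0 1 = 0"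
proof -
  have "SP (Suc (Suc m)) r s t 0 1 0 - SP (Suc (Suc m)) r s t 0 0 1
     = (bern (Suc m) * ((-1)^(Suc m) - 1)) * (r * s * (t gchoose Suc m) - s * t * (r gchoose Suc m))"
    unfolding SP_def SB_10 SB_01 by (simp add: algebra_simps)
  also have "\<dots> = 0"
  proof (cases m)
    case 0
    then show ?thesis by simp
  next
    case (Suc m')
    then show ?thesis using bern_odd[of "Suc m"] by simp
  qed
  finally show ?thesis .
qed

theorem SP_zero:
  "r + s + t = of_nat n \<Longrightarrow> x + y + z = 1 \<Longrightarrow> SP n r s t x y z = 0"
proof (induction n arbitrary: r s t x y z)
  case 0
  then show ?case by (simp add: SP_def SS_0 bernpoly_0 algebra_simps)
next
  case (Suc m)
  have mv: "SP (Suc m) r s t x y1 z1 = SP (Suc m) r s t x y2 z2"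
    if "r + s + t = of_nat (Suc m)" "x + y1 + z1 = 1" "x + y2 + z2 = 1" for r s t x y1 z1 y2 z2
  proof -
    have z: "z1 = 1 - x - y1" "z2 = 1 - x - y2" using that by (simp_all add: algebra_simps)
    have "(\<lambda>y. SP (Suc m) r s t x y (1 - x - y)) y2 = (\<lambda>y. SP (Suc m) r s t x y (1 - x - y)) y1"
    proof (rule deriv_const[of "\<lambda>y. SP (Suc m) r s t x y (1 - x - y)"])
      fix y
      have "SP m r (s-1) t x y (1 - x - y) = 0"
        by (rule Suc.IH) (use that in \<open>simp_all add: algebra_simps\<close>)
      then show "((\<lambda>y. SP (Suc m) r s t x y (1 - x - y)) has_field_derivative 0) (at y)"
        using SP_dy[OF that(1), of x y] by simp
    qed
    then show ?thesis unfolding z by simp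
  qed
  have allpts: "SP (Suc m) r s t x y z = SP (Suc m) r s t 0 0 1"
    if "r + s + t = of_nat (Suc m)" "x + y + z = 1" for r s t x y z
  proof -
    have s1: "t + r + s = of_nat (Suc m)" using that by (simp add: algebra_simps)
    have "SP (Suc m) r s t x y z = SP (Suc m) r s t x 0 (1 - x)"
      by (rule mv) (use that in \<open>simp_all\<close>)
    also have "\<dots> = SP (Suc m) t r s (1 - x) x 0"
      using SP_rot by metis
    also have "\<dots> = SP (Suc m) t r s (1 - x) 0 x"
      by (rule mv[OF s1]) simp_all
    also have "\<dots> = SP (Suc m) r s t 0 x (1 - x)"
      using SP_rot by metis
    also have "\<dots> = SP (Suc m) r s t 0 0 1"
      by (rule mv) (use that in \<open>simp_all\<close>)
    finally show ?thesis .
  qed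
  have norm: "(s + 1) * SP (Suc m) r s t 0 0 1 = 0"
    if "r + s + t = of_nat (Suc m)" for r s t
  proof -
    have s2: "r + (s + 1) + t = of_nat (Suc (Suc m))" using that by (simp add: algebra_simps)
    have "SP (Suc (Suc m)) r (s + 1) t 0 1 (1 - 0 - 1) - SP (Suc (Suc m)) r (s + 1) t 0 0 (1 - 0 - 0)
       = (- (s + 1) * SP (Suc m) r s t 0 0 1) * (1 - 0)"
    proof (rule deriv_slope[of "\<lambda>y. SP (Suc (Suc m)) r (s + 1) t 0 y (1 - 0 - y)"])
      fix y
      have "SP (Suc m) r (s + 1 - 1) t 0 y (1 - 0 - y) = SP (Suc m) r s t 0 0 1"
        using allpts[OF that, of 0 y "1 - 0 - y"] by simp
      then show "((\<lambda>y. SP (Suc (Suc m)) r (s + 1) t 0 y (1 - 0 - y)) has_field_derivative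
          (- (s + 1) * SP (Suc m) r s t 0 0 1)) (at y)"
        using SP_dy[OF s2, of 0 y] by simp
    qed
    then have "- (s + 1) * SP (Suc m) r s t 0 0 1 = 0" using SP_diff01[of m r "s+1" t] by simp
    then show ?thesis by (simp only: mult_minus_left neg_equal_0_iff_equal)
  qed
  have c1: "SP (Suc m) r s t 0 0 1 = SP (Suc m) s t r 0 0 1"
    if "r + s + t = of_nat (Suc m)" for r s t
  proof -
    have "SP (Suc m) r s t 0 0 1 = SP (Suc m) s t r 0 1 0" using SP_rot by metis
    also have "\<dots> = SP (Suc m) s t r 0 0 1"
      by (rule allpts) (use that in \<open>simp_all add: algebra_simps\<close>)
    finally show ?thesis .
  qed
  have "SP (Suc m) r s t 0 0 1 = 0"
  proof (rule ccontr)
    assume ne: "SP (Suc m) r s t 0 0 1 \<noteq> 0"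
    have "s + 1 = 0" using norm[OF Suc.prems(1)] ne by simp
    moreover have "t + 1 = 0"
    proof -
      have h: "s + t + r = of_nat (Suc m)" using Suc.prems(1) by (simp add: algebra_simps)
      have "(t + 1) * SP (Suc m) s t r 0 0 1 = 0" by (rule norm[OF h])
      then show ?thesis using ne c1[OF Suc.prems(1)] by simp
    qed
    moreover have "r + 1 = 0"
    proof -
      have h: "t + r + s = of_nat (Suc m)" using Suc.prems(1) by (simp add: algebra_simps)
      have h2: "s + t + r = of_nat (Suc m)" using Suc.prems(1) by (simp add: algebra_simps)
      have "(r + 1) * SP (Suc m) t r s 0 0 1 = 0" by (rule norm[OF h])
      moreover have "SP (Suc m) t r s 0 0 1 = SP (Suc m) r s t 0 0 1"
        using c1[OF Suc.prems(1)] c1[OF h2] by simp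
      ultimately show ?thesis using ne by simp
    qed
    moreover have "r + s + t = (r + 1) + (s + 1) + (t + 1) - 3" by simp
    ultimately have "r + s + t = -3" by simp
    then have "(of_nat (Suc m) :: complex) = -3" using Suc.prems(1) by simp
    then have "(of_nat (Suc m) :: complex) + 3 = 0" by simp
    then have "(of_nat (Suc m + 3) :: complex) = 0" by simp
    then show False by (simp only: of_nat_eq_0_iff)
  qed
  then show ?case using allpts[OF Suc.prems] by simp
qed



definition MX :: "nat \<Rightarrow> complex \<Rightarrow> complex \<Rightarrow> complex \<Rightarrow> complex \<Rightarrow> complex \<Rightarrow> complex \<Rightarrow> complex" where
  "MX m r s t x y z = r / 2 * SS eulpoly eulpoly m s t x y + SS bernpoly eulpoly (Suc m) t r y z
      - SS eulpoly bernpoly (Suc m) r s z x"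

lemma bernpoly_Suc0: "bernpoly (Suc 0) x = x - 1/2"
  using bernpoly_1 by simp

lemma eulpoly_Suc0: "eulpoly (Suc 0) x = x - 1/2"
  using eulpoly_1 by simp

lemma SS_1: "SS P Q (Suc 0) a b u v = b * P 1 u * Q 0 v - a * P 0 u * Q 1 v"
  by (simp add: SS_def)

lemma MX_dy:
  assumes "r + s + t = of_nat (Suc m)"
  shows "((\<lambda>y. MX (Suc m) r s t x y (1 - x - y)) has_field_derivative
           (- s * MX m r (s-1) t x y (1 - x - y))) (at y)"
proof -
  have c: "((\<lambda>y. x) has_field_derivative 0) (at y)" for x :: complex by (rule DERIV_const)
  have i: "((\<lambda>y. y) has_field_derivative 1) (at y)" by (rule DERIV_ident)
  have z: "((\<lambda>y. 1 - x - y) has_field_derivative -1) (at y)" by (auto intro!: derivative_eq_intros)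
  note d1 = SS_deriv[OF appell_eul appell_eul c i, of m s t]
  note d2 = SS_deriv[OF appell_bern appell_eul i z, of "Suc m" t r]
  note d3 = SS_deriv[OF appell_eul appell_bern z c, of "Suc m" r s]
  let ?z = "1 - x - y"
  have D: "((\<lambda>y. MX (Suc m) r s t x y (1 - x - y)) has_field_derivative
     (r / 2 * (0 * t * SS eulpoly eulpoly m s (t-1) x y - 1 * s * SS eulpoly eulpoly m (s-1) t x y)
      + (1 * r * SS bernpoly eulpoly (Suc m) t (r-1) y ?z - (-1) * t * SS bernpoly eulpoly (Suc m) (t-1) r y ?z)
      - ((-1) * s * SS eulpoly bernpoly (Suc m) r (s-1) ?z x - 0 * r * SS eulpoly bernpoly (Suc m) (r-1) s ?z x))) (at y)"
    unfolding MX_def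
    by (intro DERIV_add DERIV_diff DERIV_cmult d1 d2 d3)
  have p: "t * SS bernpoly eulpoly (Suc m) (t-1) r y ?z + r * SS bernpoly eulpoly (Suc m) t (r-1) y ?z
       = (t + r - of_nat (Suc m)) * SS bernpoly eulpoly (Suc m) t r y ?z"
    by (rule SS_pascal)
  have e: "t + r - of_nat (Suc m) = - s" using assms by (simp add: algebra_simps)
  have "r / 2 * (0 * t * SS eulpoly eulpoly m s (t-1) x y - 1 * s * SS eulpoly eulpoly m (s-1) t x y)
      + (1 * r * SS bernpoly eulpoly (Suc m) t (r-1) y ?z - (-1) * t * SS bernpoly eulpoly (Suc m) (t-1) r y ?z)
      - ((-1) * s * SS eulpoly bernpoly (Suc m) r (s-1) ?z x - 0 * r * SS eulpoly bernpoly (Suc m) (r-1) s ?z x)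
    = - s * (r / 2 * SS eulpoly eulpoly m (s-1) t x y - SS eulpoly bernpoly (Suc m) r (s-1) ?z x)
      + (t * SS bernpoly eulpoly (Suc m) (t-1) r y ?z + r * SS bernpoly eulpoly (Suc m) t (r-1) y ?z)"
    by (simp add: algebra_simps)
  also have "\<dots> = - s * MX m r (s-1) t x y (1 - x - y)"
    unfolding p e MX_def by (simp add: algebra_simps)
  finally show ?thesis using D by simp
qed

lemma MX_dx:
  assumes "r + s + t = of_nat (Suc m)"
  shows "((\<lambda>x. MX (Suc m) r s t x y (1 - x - y)) has_field_derivative
           (t * MX m r s (t-1) x y (1 - x - y))) (at x)"
proof -
  have c: "((\<lambda>x. y) has_field_derivative 0) (at x)" for y :: complex by (rule DERIV_const)
  have i: "((\<lambda>x. x) has_field_derivative 1) (at x)" by (rule DERIV_ident)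
  have z: "((\<lambda>x. 1 - x - y) has_field_derivative -1) (at x)" by (auto intro!: derivative_eq_intros)
  note d1 = SS_deriv[OF appell_eul appell_eul i c, of m s t]
  note d2 = SS_deriv[OF appell_bern appell_eul c z, of "Suc m" t r]
  note d3 = SS_deriv[OF appell_eul appell_bern z i, of "Suc m" r s]
  let ?z = "1 - x - y"
  have D: "((\<lambda>x. MX (Suc m) r s t x y (1 - x - y)) has_field_derivative
     (r / 2 * (1 * t * SS eulpoly eulpoly m s (t-1) x y - 0 * s * SS eulpoly eulpoly m (s-1) t x y)
      + (0 * r * SS bernpoly eulpoly (Suc m) t (r-1) y ?z - (-1) * t * SS bernpoly eulpoly (Suc m) (t-1) r y ?z)
      - ((-1) * s * SS eulpoly bernpoly (Suc m) r (s-1) ?z x - 1 * r * SS eulpoly bernpoly (Suc m) (r-1) s ?z x))) (at x)"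
    unfolding MX_def
    by (intro DERIV_add DERIV_diff DERIV_cmult d1 d2 d3)
  have p: "r * SS eulpoly bernpoly (Suc m) (r-1) s ?z x + s * SS eulpoly bernpoly (Suc m) r (s-1) ?z x
       = (r + s - of_nat (Suc m)) * SS eulpoly bernpoly (Suc m) r s ?z x"
    by (rule SS_pascal)
  have e: "r + s - of_nat (Suc m) = - t" using assms by (simp add: algebra_simps)
  have "r / 2 * (1 * t * SS eulpoly eulpoly m s (t-1) x y - 0 * s * SS eulpoly eulpoly m (s-1) t x y)
      + (0 * r * SS bernpoly eulpoly (Suc m) t (r-1) y ?z - (-1) * t * SS bernpoly eulpoly (Suc m) (t-1) r y ?z)
      - ((-1) * s * SS eulpoly bernpoly (Suc m) r (s-1) ?z x - 1 * r * SS eulpoly bernpoly (Suc m) (r-1) s ?z x)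
    = t * (r / 2 * SS eulpoly eulpoly m s (t-1) x y + SS bernpoly eulpoly (Suc m) (t-1) r y ?z)
      + (r * SS eulpoly bernpoly (Suc m) (r-1) s ?z x + s * SS eulpoly bernpoly (Suc m) r (s-1) ?z x)"
    by (simp add: algebra_simps)
  also have "\<dots> = t * MX m r s (t-1) x y (1 - x - y)"
    unfolding p e MX_def by (simp add: algebra_simps)
  finally show ?thesis using D by simp
qed

lemma SEE_pt: "SS eulpoly eulpoly m s t 0 1 + SS eulpoly eulpoly m s t 0 0 = 2 * (t gchoose m) * eulpoly m 0"
proof -
  have "SS eulpoly eulpoly m s t 0 1 + SS eulpoly eulpoly m s t 0 0
     = (\<Sum>k\<le>m. if k = 0 then 2 * (t gchoose m) * eulpoly m 0 else 0)"
    unfolding SS_def sum.distrib[symmetric]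
  proof (rule sum.cong[OF refl])
    fix k assume "k \<in> {..m}"
    have "(-1)^k * (s gchoose k) * (t gchoose (m - k)) * eulpoly (m - k) 0 * eulpoly k 1 +
          (-1)^k * (s gchoose k) * (t gchoose (m - k)) * eulpoly (m - k) 0 * eulpoly k 0
        = (-1)^k * (s gchoose k) * (t gchoose (m - k)) * eulpoly (m - k) 0 * (eulpoly k 1 + eulpoly k 0)"
      by (simp add: algebra_simps)
    then show "(-1)^k * (s gchoose k) * (t gchoose (m - k)) * eulpoly (m - k) 0 * eulpoly k 1 +
          (-1)^k * (s gchoose k) * (t gchoose (m - k)) * eulpoly (m - k) 0 * eulpoly k 0
        = (if k = 0 then 2 * (t gchoose m) * eulpoly m 0 else 0)"
      by (simp add: eulpoly_sum01)
  qed
  then show ?thesis by simp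
qed

lemma SBE_pt: "SS bernpoly eulpoly (Suc m) t r 1 0 + SS bernpoly eulpoly (Suc m) t r 0 1
   = 2 * (r gchoose Suc m) * bern (Suc m) + (-1)^m * (t gchoose m) * r * eulpoly m 0"
proof -
  have "SS bernpoly eulpoly (Suc m) t r 1 0 + SS bernpoly eulpoly (Suc m) t r 0 1
     = (\<Sum>k\<le>Suc m. (if k = 0 then 2 * (r gchoose Suc m) * bern (Suc m) else 0)
          + (if Suc m - k = 1 then (-1)^k * (t gchoose k) * r * eulpoly k 0 else 0))"
    unfolding SS_def sum.distrib[symmetric]
  proof (rule sum.cong[OF refl])
    fix k assume "k \<in> {..Suc m}"
    then have k: "k \<le> Suc m" by simp
    have b1: "bernpoly (Suc m - k) 1 = bern (Suc m - k) + (if Suc m - k = 1 then 1 else 0)"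
      by (rule bernpoly_at1)
    have "(-1)^k * (t gchoose k) * (r gchoose (Suc m - k)) * bernpoly (Suc m - k) 1 * eulpoly k 0 +
          (-1)^k * (t gchoose k) * (r gchoose (Suc m - k)) * bernpoly (Suc m - k) 0 * eulpoly k 1
        = (-1)^k * (t gchoose k) * (r gchoose (Suc m - k)) * (bern (Suc m - k) * (eulpoly k 1 + eulpoly k 0)
           + (if Suc m - k = 1 then eulpoly k 0 else 0))"
      unfolding b1 bernpoly_at0 by (simp add: algebra_simps)
    also have "\<dots> = (if k = 0 then 2 * (r gchoose Suc m) * bern (Suc m) else 0)
          + (if Suc m - k = 1 then (-1)^k * (t gchoose k) * r * eulpoly k 0 else 0)"
      by (auto simp: eulpoly_sum01 algebra_simps)
    finally show "(-1)^k * (t gchoose k) * (r gchoose (Suc m - k)) * bernpoly (Suc m - k) 1 * eulpoly k 0 +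
          (-1)^k * (t gchoose k) * (r gchoose (Suc m - k)) * bernpoly (Suc m - k) 0 * eulpoly k 1
        = (if k = 0 then 2 * (r gchoose Suc m) * bern (Suc m) else 0)
          + (if Suc m - k = 1 then (-1)^k * (t gchoose k) * r * eulpoly k 0 else 0)" .
  qed
  also have "\<dots> = 2 * (r gchoose Suc m) * bern (Suc m) + (-1)^m * (t gchoose m) * r * eulpoly m 0"
    unfolding sum.distrib sum_single_Suc by simp
  finally show ?thesis .
qed

lemma SEB_pt: "SS eulpoly bernpoly (Suc m) r s 0 0 + SS eulpoly bernpoly (Suc m) r s 1 0
   = 2 * (-1)^(Suc m) * (r gchoose Suc m) * bern (Suc m)"
proof -
  have "SS eulpoly bernpoly (Suc m) r s 0 0 + SS eulpoly bernpoly (Suc m) r s 1 0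
     = (\<Sum>k\<le>Suc m. if k = Suc m then 2 * (-1)^(Suc m) * (r gchoose Suc m) * bern (Suc m) else 0)"
    unfolding SS_def sum.distrib[symmetric]
  proof (rule sum.cong[OF refl])
    fix k assume "k \<in> {..Suc m}"
    then have k: "k \<le> Suc m" by simp
    have "(-1)^k * (r gchoose k) * (s gchoose (Suc m - k)) * eulpoly (Suc m - k) 0 * bernpoly k 0 +
          (-1)^k * (r gchoose k) * (s gchoose (Suc m - k)) * eulpoly (Suc m - k) 1 * bernpoly k 0
        = (-1)^k * (r gchoose k) * (s gchoose (Suc m - k)) * (eulpoly (Suc m - k) 1 + eulpoly (Suc m - k) 0) * bernpoly k 0"
      by (simp add: algebra_simps)
    then show "(-1)^k * (r gchoose k) * (s gchoose (Suc m - k)) * eulpoly (Suc m - k) 0 * bernpoly k 0 +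
          (-1)^k * (r gchoose k) * (s gchoose (Suc m - k)) * eulpoly (Suc m - k) 1 * bernpoly k 0
        = (if k = Suc m then 2 * (-1)^(Suc m) * (r gchoose Suc m) * bern (Suc m) else 0)"
      using k by (auto simp: eulpoly_sum01 bernpoly_at0)
  qed
  then show ?thesis by simp
qed

lemma MX_sum: "MX (Suc m) r s t 0 1 0 + MX (Suc m) r s t 0 0 1 = 0"
proof -
  have "MX (Suc m) r s t 0 1 0 + MX (Suc m) r s t 0 0 1
     = r / 2 * (SS eulpoly eulpoly (Suc m) s t 0 1 + SS eulpoly eulpoly (Suc m) s t 0 0)
       + (SS bernpoly eulpoly (Suc (Suc m)) t r 1 0 + SS bernpoly eulpoly (Suc (Suc m)) t r 0 1)
       - (SS eulpoly bernpoly (Suc (Suc m)) r s 0 0 + SS eulpoly bernpoly (Suc (Suc m)) r s 1 0)"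
    unfolding MX_def by (simp add: algebra_simps)
  also have "\<dots> = r * (t gchoose Suc m) * (eulpoly (Suc m) 0 * (1 + (-1)^(Suc m)))
      - 2 * (r gchoose Suc (Suc m)) * (bern (Suc (Suc m)) * ((-1)^(Suc (Suc m)) - 1))"
    unfolding SEE_pt SBE_pt SEB_pt by (simp add: algebra_simps)
  also have "\<dots> = 0"
  proof -
    have A: "eulpoly (Suc m) 0 * (1 + (-1)^(Suc m)) = 0" by (rule eulpoly_at0) simp
    have B: "bern (Suc (Suc m)) * ((-1)^(Suc (Suc m)) - 1) = 0" by (rule bern_odd) simp
    show ?thesis by (simp only: A B mult_zero_right diff_self)
  qed
  finally show ?thesis .
qed

theorem MX_zero:
  "r + s + t = of_nat m \<Longrightarrow> x + y + z = 1 \<Longrightarrow> MX m r s t x y z = 0"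
proof (induction m arbitrary: r s t x y z)
  case 0
  then have z: "z = 1 - x - y" by (simp add: algebra_simps)
  have "t = (r + s + t) - r - s" by simp
  also have "\<dots> = - r - s" using 0 by simp
  finally have t: "t = - r - s" .
  show ?case unfolding MX_def SS_1 SS_0 z t
    by (simp add: eulpoly_0 eulpoly_Suc0 bernpoly_0 bernpoly_Suc0 algebra_simps diff_divide_distrib add_divide_distrib)
next
  case (Suc m)
  have mvy: "MX (Suc m) r s t x y1 z1 = MX (Suc m) r s t x y2 z2"
    if "r + s + t = of_nat (Suc m)" "x + y1 + z1 = 1" "x + y2 + z2 = 1" for r s t x y1 z1 y2 z2
  proof -
    have z: "z1 = 1 - x - y1" "z2 = 1 - x - y2" using that by (simp_all add: algebra_simps)
    have "(\<lambda>y. MX (Suc m) r s t x y (1 - x - y)) y2 = (\<lambda>y. MX (Suc m) r s t x y (1 - x - y)) y1"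
    proof (rule deriv_const[of "\<lambda>y. MX (Suc m) r s t x y (1 - x - y)"])
      fix y
      have "MX m r (s-1) t x y (1 - x - y) = 0"
        by (rule Suc.IH) (use that in \<open>simp_all add: algebra_simps\<close>)
      then show "((\<lambda>y. MX (Suc m) r s t x y (1 - x - y)) has_field_derivative 0) (at y)"
        using MX_dy[OF that(1), of x y] by simp
    qed
    then show ?thesis unfolding z by simp
  qed
  have mvx: "MX (Suc m) r s t x1 y z1 = MX (Suc m) r s t x2 y z2"
    if "r + s + t = of_nat (Suc m)" "x1 + y + z1 = 1" "x2 + y + z2 = 1" for r s t x1 z1 y x2 z2
  proof -
    have z: "z1 = 1 - x1 - y" "z2 = 1 - x2 - y" using that by (simp_all add: algebra_simps)
    have "(\<lambda>x. MX (Suc m) r s t x y (1 - x - y)) x2 = (\<lambda>x. MX (Suc m) r s t x y (1 - x - y)) x1"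
    proof (rule deriv_const[of "\<lambda>x. MX (Suc m) r s t x y (1 - x - y)"])
      fix x
      have "MX m r s (t-1) x y (1 - x - y) = 0"
        by (rule Suc.IH) (use that in \<open>simp_all add: algebra_simps\<close>)
      then show "((\<lambda>x. MX (Suc m) r s t x y (1 - x - y)) has_field_derivative 0) (at x)"
        using MX_dx[OF that(1), of y x] by simp
    qed
    then show ?thesis unfolding z by simp
  qed
  have allpts: "MX (Suc m) r s t x y z = MX (Suc m) r s t 0 0 1"
    if "r + s + t = of_nat (Suc m)" "x + y + z = 1" for x y z
  proof -
    have "MX (Suc m) r s t x y z = MX (Suc m) r s t x 0 (1 - x)"
      by (rule mvy) (use that in \<open>simp_all\<close>)
    also have "\<dots> = MX (Suc m) r s t 0 0 1"
      by (rule mvx) (use that in \<open>simp_all\<close>)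
    finally show ?thesis .
  qed
  have "MX (Suc m) r s t 0 1 0 = MX (Suc m) r s t 0 0 1"
    by (rule allpts[OF Suc.prems(1)]) simp
  then have "MX (Suc m) r s t 0 0 1 = 0" using MX_sum[of m r s t] by simp
  then show ?case using allpts[OF Suc.prems] by simp
qed



fun gbd :: "nat \<Rightarrow> complex \<Rightarrow> complex" where
  "gbd 0 a = 0"
| "gbd (Suc k) a = (gbd k a * (a - of_nat k) + (a gchoose k)) / of_nat (Suc k)"

lemma gchoose_Suc_alt: "(a gchoose Suc k) = (a gchoose k) * (a - of_nat k) / of_nat (Suc k)"
proof -
  have "of_nat (Suc k) * (a gchoose Suc k) = (a - of_nat k) * (a gchoose k)"
    using gbinomial_absorption[of k a] gbinomial_absorb_comp[of a k] by simp
  then show ?thesis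
    by (simp add: field_simps del: of_nat_Suc)
qed

lemma gchoose_deriv: "((\<lambda>a. a gchoose k) has_field_derivative gbd k a) (at a)"
proof (induction k arbitrary: a)
  case 0
  then show ?case by simp
next
  case (Suc k)
  have e: "(\<lambda>a. a gchoose Suc k) = (\<lambda>a. (a gchoose k) * (a - of_nat k) / of_nat (Suc k))"
    by (simp add: gchoose_Suc_alt fun_eq_iff)
  have "((\<lambda>a. (a gchoose k) * (a - of_nat k) / of_nat (Suc k)) has_field_derivative
      (gbd k a * (a - of_nat k) + (a gchoose k) * 1) / of_nat (Suc k)) (at a)"
    by (rule DERIV_cdivide[OF DERIV_mult'[OF Suc.IH DERIV_diff[OF DERIV_ident DERIV_const]], THEN DERIV_cong])
       (simp add: algebra_simps)
  then show ?case unfolding e by (simp add: algebra_simps)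
qed

lemma gchoose_chain:
  assumes "(a has_field_derivative da) (at r)"
  shows "((\<lambda>r. a r gchoose k) has_field_derivative (gbd k (a r) * da)) (at r)"
  using DERIV_chain2[OF gchoose_deriv assms] .

lemma gbd_at0: "1 \<le> k \<Longrightarrow> gbd k 0 = (-1)^(k-1) / of_nat k"
proof (induction k)
  case 0 then show ?case by simp
next
  case (Suc k)
  show ?case
  proof (cases k)
    case 0 then show ?thesis by simp
  next
    case (Suc k')
    then have "gbd k 0 = (-1)^k' / of_nat (Suc k')" using Suc.IH by simp
    then show ?thesis using Suc by (simp add: field_simps del: of_nat_Suc)
  qed
qed

lemma gbd_nat: "k \<le> N \<Longrightarrow> gbd k (of_nat N) = of_nat (N choose k) * (harm N - harm (N - k))"
proof (induction k)
  case 0 then show ?case by simp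
next
  case (Suc k)
  then have k: "k < N" by simp
  have IH: "gbd k (of_nat N) = of_nat (N choose k) * (harm N - harm (N - k))" using Suc by simp
  have h: "harm (N - k) = harm (N - Suc k) + inverse (of_nat (N - k) :: complex)"
    using harm_Suc[of "N - Suc k"] k by (simp add: Suc_diff_Suc)
  have c: "of_nat (N choose Suc k) * of_nat (Suc k) = (of_nat (N choose k) * (of_nat N - of_nat k) :: complex)"
  proof -
    have "(of_nat N gchoose Suc k) * of_nat (Suc k) = ((of_nat N :: complex) gchoose k) * (of_nat N - of_nat k)"
      using gbinomial_absorption[of k "of_nat N :: complex"] gbinomial_absorb_comp[of "of_nat N :: complex" k]
      by (simp add: algebra_simps)
    then show ?thesis by (simp add: binomial_gbinomial)
  qed
  have nk: "(of_nat N - of_nat k :: complex) \<noteq> 0" using k by simp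
  have nk': "(of_nat (N - k) :: complex) = of_nat N - of_nat k" using k by (simp add: of_nat_diff)
  have key: "\<And>G c c1 hN hk hk1 d K. (K::complex) \<noteq> 0 \<Longrightarrow> d \<noteq> 0 \<Longrightarrow> c1 * K = c * d \<Longrightarrow>
      G = c * (hN - hk) \<Longrightarrow> hk = hk1 + inverse d \<Longrightarrow> (G * d + c) / K = c1 * (hN - hk1)"
  proof -
    fix G c c1 hN hk hk1 d K :: complex
    assume K: "K \<noteq> 0" and d: "d \<noteq> 0" and cc: "c1 * K = c * d" and G: "G = c * (hN - hk)" and hk: "hk = hk1 + inverse d"
    have "G * d + c = c * d * (hN - hk1) - c * (inverse d * d) + c"
      unfolding G hk by (simp add: algebra_simps)
    also have "\<dots> = c * d * (hN - hk1)" using d by simp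
    also have "\<dots> = c1 * K * (hN - hk1)" using cc by simp
    finally show "(G * d + c) / K = c1 * (hN - hk1)" using K by simp
  qed
  have "gbd (Suc k) (of_nat N) = (gbd k (of_nat N) * (of_nat N - of_nat k) + of_nat (N choose k)) / of_nat (Suc k)"
    by (simp add: binomial_gbinomial del: of_nat_Suc)
  also have "\<dots> = of_nat (N choose Suc k) * (harm N - harm (N - Suc k))"
  proof (rule key[OF _ nk c IH])
    show "(of_nat (Suc k) :: complex) \<noteq> 0" by (simp only: of_nat_eq_0_iff)
    show "harm (N - k) = harm (N - Suc k) + inverse (of_nat N - of_nat k :: complex)" using h nk' by simp
  qed
  finally show ?case .
qed

lemma SS_param_deriv:
  assumes a: "(a has_field_derivative da) (at r)" and b: "(b has_field_derivative db) (at r)"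
  shows "((\<lambda>r. SS P Q n (a r) (b r) u v) has_field_derivative
    (\<Sum>k\<le>n. (-1)^k * (gbd k (a r) * da * (b r gchoose (n-k)) + (a r gchoose k) * (gbd (n-k) (b r) * db)) * P (n-k) u * Q k v)) (at r)"
proof -
  have g: "((\<lambda>r. (a r gchoose k) * (b r gchoose (n-k))) has_field_derivative
     (gbd k (a r) * da * (b r gchoose (n-k)) + (a r gchoose k) * (gbd (n-k) (b r) * db))) (at r)" for k
    by (rule DERIV_cong[OF DERIV_mult'[OF gchoose_chain[OF a] gchoose_chain[OF b]]]) (simp add: algebra_simps)
  have t: "((\<lambda>r. (-1)^k * ((a r gchoose k) * (b r gchoose (n-k))) * (P (n-k) u * Q k v)) has_field_derivative
     (-1)^k * (gbd k (a r) * da * (b r gchoose (n-k)) + (a r gchoose k) * (gbd (n-k) (b r) * db)) * (P (n-k) u * Q k v)) (at r)" for k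
    by (rule DERIV_cmult_right[OF DERIV_cmult[OF g]])
  have "((\<lambda>r. \<Sum>k\<le>n. (-1)^k * ((a r gchoose k) * (b r gchoose (n-k))) * (P (n-k) u * Q k v)) has_field_derivative
    (\<Sum>k\<le>n. (-1)^k * (gbd k (a r) * da * (b r gchoose (n-k)) + (a r gchoose k) * (gbd (n-k) (b r) * db)) * (P (n-k) u * Q k v))) (at r)"
    by (rule DERIV_sum) (rule t)
  then show ?thesis unfolding SS_def by (simp add: mult.assoc)
qed

lemma gchoose_m1: "((-1::complex) gchoose k) = (-1)^k"
proof -
  have "((-1::complex) gchoose k) = (-1)^k * ((of_nat k - (-1) - 1) gchoose k)"
    by (rule gbinomial_negated_upper)
  also have "(of_nat k - (-1) - 1 :: complex) = of_nat k" by simp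
  finally show ?thesis by (simp add: binomial_gbinomial[symmetric])
qed

lemma gchoose_0: "((0::complex) gchoose k) = (if k = 0 then 1 else 0)"
  by (cases k) (simp_all add: gbinomial_Suc)

lemma sum_reflect: "(\<Sum>k\<le>n. f k) = (\<Sum>k\<le>n. f (n - k))" for n :: nat
  by (rule sum.reindex_bij_witness[of _ "\<lambda>k. n - k" "\<lambda>k. n - k"]) auto

lemma sum_reflect1: "1 \<le> n \<Longrightarrow> (\<Sum>k\<le>n - 1. f k) = (\<Sum>j=1..n. f (n - j))" for n :: nat
  by (rule sum.reindex_bij_witness[of _ "\<lambda>k. n - k" "\<lambda>k. n - k"]) auto

lemma sum_split0: "(\<Sum>k\<le>n. f k) = f 0 + (\<Sum>k=1..n. f k)" for n :: nat
proof -
  have "(\<Sum>k\<le>n. f k) = (\<Sum>k=0..n. f k)" by (simp add: atLeast0AtMost)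
  also have "\<dots> = f 0 + (\<Sum>k=Suc 0..n. f k)" by (rule sum.atLeast_Suc_atMost) simp
  finally show ?thesis by simp
qed



lemma neg1_split: "k \<le> n \<Longrightarrow> (-1::complex)^k * (-1)^(n-k) = (-1)^n"
  by (simp add: power_add[symmetric])

lemma SS_m1b: "SS P Q p a (-1) u v = (-1)^p * (\<Sum>k\<le>p. (a gchoose k) * P (p-k) u * Q k v)"
  unfolding SS_def sum_distrib_left
proof (rule sum.cong[OF refl])
  fix k assume "k \<in> {..p}"
  then have k: "k \<le> p" by simp
  show "(-1)^k * (a gchoose k) * ((-1) gchoose (p - k)) * P (p - k) u * Q k v =
        (-1)^p * ((a gchoose k) * P (p - k) u * Q k v)"
    unfolding gchoose_m1 using neg1_split[OF k] by (simp add: algebra_simps)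
qed

lemma SS_m1a: "SS P Q n (-1) b u v = (\<Sum>k\<le>n. (b gchoose (n-k)) * P (n-k) u * Q k v)"
  unfolding SS_def
proof (rule sum.cong[OF refl])
  fix k assume "k \<in> {..n}"
  have "(-1::complex)^k * (-1)^k = 1" by (simp add: power_add[symmetric])
  then show "(-1)^k * ((-1) gchoose k) * (b gchoose (n - k)) * P (n - k) u * Q k v =
        (b gchoose (n - k)) * P (n - k) u * Q k v"
    unfolding gchoose_m1 by (simp add: algebra_simps)
qed

lemma sumH:
  "(\<Sum>k\<le>n. (-1)^k * (((-1) gchoose k) * gbd (n-k) 0) * P (n - k) y * Q k z)
   = - (\<Sum>k=1..n. (-1)^k * P k y / of_nat k * Q (n - k) z)"
proof -
  have "(\<Sum>k\<le>n. (-1)^k * (((-1) gchoose k) * gbd (n-k) 0) * P (n - k) y * Q k z)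
      = (\<Sum>k\<le>n. gbd (n-k) 0 * P (n - k) y * Q k z)"
  proof (rule sum.cong[OF refl])
    fix k assume "k \<in> {..n}"
    have "(-1::complex)^k * (-1)^k = 1" by (simp add: power_add[symmetric])
    then show "(-1)^k * (((-1) gchoose k) * gbd (n-k) 0) * P (n - k) y * Q k z = gbd (n-k) 0 * P (n - k) y * Q k z"
      unfolding gchoose_m1 by (simp add: algebra_simps)
  qed
  also have "\<dots> = (\<Sum>k\<le>n. gbd k 0 * P k y * Q (n - k) z)"
    by (subst sum_reflect) simp
  also have "\<dots> = (\<Sum>k=1..n. gbd k 0 * P k y * Q (n - k) z)"
    by (subst sum_split0) simp
  also have "\<dots> = (\<Sum>k=1..n. - ((-1)^k * P k y / of_nat k * Q (n - k) z))"
  proof (rule sum.cong[OF refl])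
    fix k assume "k \<in> {1..n}"
    then have k: "1 \<le> k" by simp
    have "(-1::complex)^k = - ((-1)^(k-1))" using k by (cases k) simp_all
    then show "gbd k 0 * P k y * Q (n - k) z = - ((-1)^k * P k y / of_nat k * Q (n - k) z)"
      unfolding gbd_at0[OF k] by simp
  qed
  also have "\<dots> = - (\<Sum>k=1..n. (-1)^k * P k y / of_nat k * Q (n - k) z)"
    by (simp add: sum_negf)
  finally show ?thesis .
qed

lemma sumK:
  "(\<Sum>k\<le>n. (-1)^k * (gbd k 0 * (of_nat N gchoose (n-k)) - (0 gchoose k) * gbd (n-k) (of_nat N)) * P (n-k) z * Q k x)
   = - (\<Sum>k=1..n. of_nat (N choose (n-k)) * Q k x / of_nat k * P (n-k) z) - gbd n (of_nat N) * P n z * Q 0 x"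
proof -
  have "(\<Sum>k\<le>n. (-1)^k * (gbd k 0 * (of_nat N gchoose (n-k)) - (0 gchoose k) * gbd (n-k) (of_nat N)) * P (n-k) z * Q k x)
      = - gbd n (of_nat N) * P n z * Q 0 x +
        (\<Sum>k=1..n. (-1)^k * (gbd k 0 * (of_nat N gchoose (n-k)) - (0 gchoose k) * gbd (n-k) (of_nat N)) * P (n-k) z * Q k x)"
    by (subst sum_split0) (simp add: gchoose_0)
  also have "(\<Sum>k=1..n. (-1)^k * (gbd k 0 * (of_nat N gchoose (n-k)) - (0 gchoose k) * gbd (n-k) (of_nat N)) * P (n-k) z * Q k x)
      = (\<Sum>k=1..n. - (of_nat (N choose (n-k)) * Q k x / of_nat k * P (n-k) z))"
  proof (rule sum.cong[OF refl])
    fix k assume "k \<in> {1..n}"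
    then have k: "1 \<le> k" by simp
    have e: "(-1::complex)^k * (-1)^(k-1) = -1"
    proof -
      have "(-1::complex)^k * (-1)^(k-1) = (-1)^(k + (k-1))" by (simp add: power_add)
      also have "k + (k - 1) = Suc (2 * (k - 1))" using k by simp
      finally show ?thesis by simp
    qed
    have "(-1)^k * (gbd k 0 * (of_nat N gchoose (n-k)) - (0 gchoose k) * gbd (n-k) (of_nat N)) * P (n-k) z * Q k x
        = ((-1::complex)^k * (-1)^(k-1)) / of_nat k * of_nat (N choose (n-k)) * P (n-k) z * Q k x"
      unfolding gbd_at0[OF k] using k by (simp add: gchoose_0 binomial_gbinomial)
    also have "\<dots> = - (of_nat (N choose (n-k)) * Q k x / of_nat k * P (n-k) z)"
      unfolding e by simp
    finally show "(-1)^k * (gbd k 0 * (of_nat N gchoose (n-k)) - (0 gchoose k) * gbd (n-k) (of_nat N)) * P (n-k) z * Q k x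
        = - (of_nat (N choose (n-k)) * Q k x / of_nat k * P (n-k) z)" .
  qed
  finally show ?thesis by (simp add: sum_negf)
qed



lemma ident1:
  fixes n :: nat and x y z :: complex
  assumes n: "n \<ge> 1" and xyz: "x + y + z = 1"
  shows "(\<Sum>k\<le>n. of_nat ((n + 1) choose k) * ((-1) ^ n * bernpoly k x - bernpoly k y) * eulpoly (n - k) z)
           = of_nat (n + 1) / 2 * (\<Sum>l\<le>n - 1. (-1) ^ l * eulpoly l x * eulpoly (n - 1 - l) y)"
proof -
  obtain p where np: "n = Suc p" using n by (cases n) auto
  define r :: complex where "r = of_nat (n + 1)"
  have rg: "(r gchoose k) = of_nat ((n + 1) choose k)" for k
    unfolding r_def by (simp add: binomial_gbinomial)
  have M: "MX p r (-1) (-1) x y z = 0"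
    by (rule MX_zero[OF _ xyz]) (simp add: r_def np)
  have A: "SS eulpoly eulpoly p (-1) (-1) x y = (\<Sum>l\<le>n - 1. (-1) ^ l * eulpoly l x * eulpoly (n - 1 - l) y)"
  proof -
    have "SS eulpoly eulpoly p (-1) (-1) x y = (\<Sum>k\<le>p. (-1)^p * ((-1)^k * eulpoly (p-k) x * eulpoly k y))"
      unfolding SS_m1b gchoose_m1 sum_distrib_left ..
    also have "\<dots> = (\<Sum>k\<le>p. (-1)^(p-k) * eulpoly (p-k) x * eulpoly (p - (p - k)) y)"
    proof (rule sum.cong[OF refl])
      fix k assume "k \<in> {..p}"
      then have k: "k \<le> p" by simp
      have "(-1::complex)^p = (-1)^(p-k) * (-1)^k" using neg1_split[OF k] by (simp add: mult.commute)
      then have "(-1::complex)^p * (-1)^k = (-1)^(p-k) * ((-1)^k * (-1)^k)" by (simp add: mult.assoc)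
      also have "(-1::complex)^k * (-1)^k = 1" by (simp add: power_add[symmetric])
      finally have "(-1::complex)^p * (-1)^k = (-1)^(p-k)" by simp
      then show "(-1)^p * ((-1)^k * eulpoly (p-k) x * eulpoly k y) = (-1)^(p-k) * eulpoly (p-k) x * eulpoly (p - (p - k)) y"
        using k by (simp add: mult.assoc[symmetric])
    qed
    also have "\<dots> = (\<Sum>l\<le>p. (-1)^l * eulpoly l x * eulpoly (p - l) y)"
      by (rule sum_reflect[symmetric])
    finally show ?thesis using np by simp
  qed
  have B: "SS bernpoly eulpoly n (-1) r y z = (\<Sum>k\<le>n. of_nat ((n + 1) choose k) * bernpoly k y * eulpoly (n - k) z)"
  proof -
    have "SS bernpoly eulpoly n (-1) r y z = (\<Sum>k\<le>n. of_nat ((n + 1) choose (n - k)) * bernpoly (n - k) y * eulpoly k z)"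
      unfolding SS_m1a rg ..
    also have "\<dots> = (\<Sum>k\<le>n. of_nat ((n + 1) choose (n - (n - k))) * bernpoly (n - (n - k)) y * eulpoly (n - k) z)"
      by (subst sum_reflect) (rule sum.cong; simp)
    also have "\<dots> = (\<Sum>k\<le>n. of_nat ((n + 1) choose k) * bernpoly k y * eulpoly (n - k) z)"
      by (rule sum.cong) simp_all
    finally show ?thesis .
  qed
  have C: "SS eulpoly bernpoly n r (-1) z x = (-1)^n * (\<Sum>k\<le>n. of_nat ((n + 1) choose k) * bernpoly k x * eulpoly (n - k) z)"
    unfolding SS_m1b rg by (simp add: algebra_simps)
  have "MX p r (-1) (-1) x y z = r / 2 * SS eulpoly eulpoly p (-1) (-1) x y + SS bernpoly eulpoly n (-1) r y z
      - SS eulpoly bernpoly n r (-1) z x"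
    unfolding MX_def np ..
  then have E: "r / 2 * (\<Sum>l\<le>n - 1. (-1) ^ l * eulpoly l x * eulpoly (n - 1 - l) y)
      = (-1)^n * (\<Sum>k\<le>n. of_nat ((n + 1) choose k) * bernpoly k x * eulpoly (n - k) z)
        - (\<Sum>k\<le>n. of_nat ((n + 1) choose k) * bernpoly k y * eulpoly (n - k) z)"
    using M unfolding A B C by (simp add: algebra_simps)
  have "(\<Sum>k\<le>n. of_nat ((n + 1) choose k) * ((-1) ^ n * bernpoly k x - bernpoly k y) * eulpoly (n - k) z)
      = (-1)^n * (\<Sum>k\<le>n. of_nat ((n + 1) choose k) * bernpoly k x * eulpoly (n - k) z)
        - (\<Sum>k\<le>n. of_nat ((n + 1) choose k) * bernpoly k y * eulpoly (n - k) z)"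
    by (simp add: sum_distrib_left sum_subtractf[symmetric] algebra_simps)
  then show ?thesis using E unfolding r_def by simp
qed



lemma ident2:
  fixes n :: nat and x y z :: complex
  assumes n: "n \<ge> 1" and xyz: "x + y + z = 1"
  shows "(\<Sum>k=1..n. of_nat (n choose k) * bernpoly k x / of_nat k * eulpoly (n - k) z)
           - (\<Sum>k=1..n. (-1) ^ k * bernpoly k y / of_nat k * eulpoly (n - k) z)
         = (-1) ^ n / 2 * (\<Sum>l\<le>n - 1. of_nat (n choose l) * eulpoly l y * eulpoly (n - 1 - l) x)
           - harm n * eulpoly n z"
proof -
  obtain p where np: "n = Suc p" using n by (cases n) auto
  have Ffun: "(\<lambda>r. r / 2 * SS eulpoly eulpoly p (of_nat n - r) (-1) x y + SS bernpoly eulpoly n (-1) r y z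
       - SS eulpoly bernpoly n r (of_nat n - r) z x) = (\<lambda>r. 0)"
  proof (rule ext)
    fix r :: complex
    have "MX p r (of_nat n - r) (-1) x y z = 0"
      by (rule MX_zero[OF _ xyz]) (simp add: np)
    then show "r / 2 * SS eulpoly eulpoly p (of_nat n - r) (-1) x y + SS bernpoly eulpoly n (-1) r y z
       - SS eulpoly bernpoly n r (of_nat n - r) z x = 0"
      unfolding MX_def np by simp
  qed
  have da: "((\<lambda>r. of_nat n - r) has_field_derivative -1) (at (0::complex))"
    by (auto intro!: derivative_eq_intros)
  note dG = SS_param_deriv[where P=eulpoly and Q=eulpoly and n=p and u=x and v=y, OF da DERIV_const]
  note dH = SS_param_deriv[where P=bernpoly and Q=eulpoly and n=n and u=y and v=z, OF DERIV_const DERIV_ident]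
  note dK = SS_param_deriv[where P=eulpoly and Q=bernpoly and n=n and u=z and v=x, OF DERIV_ident da]
  note dF0 = DERIV_diff[OF DERIV_add[OF DERIV_mult'[OF DERIV_cdivide[OF DERIV_ident] dG] dH] dK]
  have dF: "((\<lambda>r. r / 2 * SS eulpoly eulpoly p (of_nat n - r) (-1) x y + SS bernpoly eulpoly n (-1) r y z
       - SS eulpoly bernpoly n r (of_nat n - r) z x) has_field_derivative
     (1/2 * SS eulpoly eulpoly p (of_nat n) (-1) x y
      + (\<Sum>k\<le>n. (-1)^k * (((-1) gchoose k) * gbd (n-k) 0) * bernpoly (n - k) y * eulpoly k z)
      - (\<Sum>k\<le>n. (-1)^k * (gbd k 0 * (of_nat n gchoose (n-k)) - (0 gchoose k) * gbd (n-k) (of_nat n)) * eulpoly (n-k) z * bernpoly k x)))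
     (at 0)"
    by (rule DERIV_cong[OF dF0]) (simp add: algebra_simps)
  have dZ: "((\<lambda>r. r / 2 * SS eulpoly eulpoly p (of_nat n - r) (-1) x y + SS bernpoly eulpoly n (-1) r y z
       - SS eulpoly bernpoly n r (of_nat n - r) z x) has_field_derivative 0) (at 0)"
    unfolding Ffun by (rule DERIV_const)
  have D0: "1/2 * SS eulpoly eulpoly p (of_nat n) (-1) x y
      + (\<Sum>k\<le>n. (-1)^k * (((-1) gchoose k) * gbd (n-k) 0) * bernpoly (n - k) y * eulpoly k z)
      - (\<Sum>k\<le>n. (-1)^k * (gbd k 0 * (of_nat n gchoose (n-k)) - (0 gchoose k) * gbd (n-k) (of_nat n)) * eulpoly (n-k) z * bernpoly k x) = 0"
    by (rule DERIV_unique[OF dF dZ])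
  have G0: "SS eulpoly eulpoly p (of_nat n) (-1) x y = (-1)^p * (\<Sum>l\<le>n - 1. of_nat (n choose l) * eulpoly l y * eulpoly (n - 1 - l) x)"
    unfolding SS_m1b binomial_gbinomial[symmetric] using np by (simp add: algebra_simps)
  have hn: "gbd n (of_nat n) = harm n"
    using gbd_nat[of n n] by (simp add: harm_def)
  have K1: "(\<Sum>k=1..n. of_nat (n choose (n-k)) * bernpoly k x / of_nat k * eulpoly (n-k) z)
      = (\<Sum>k=1..n. of_nat (n choose k) * bernpoly k x / of_nat k * eulpoly (n - k) z)"
    by (rule sum.cong) (simp_all add: binomial_symmetric[symmetric])
  have pn: "(-1::complex)^p = - ((-1)^n)" using np by simp
  from D0 show ?thesis
    unfolding G0 sumH sumK K1 hn pn by (simp add: bernpoly_0 algebra_simps)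
qed



lemma ident3:
  fixes n :: nat and x y z :: complex
  assumes n: "n \<ge> 1" and xyz: "x + y + z = 1"
  shows "(-1) ^ n * (\<Sum>k\<le>n. of_nat ((n + 1) choose k) * bernpoly (n - k) x * bernpoly k y)
           + (\<Sum>k\<le>n - 1. of_nat ((n + 1) choose k) * bernpoly (n - k) x / of_nat (n - k) * bernpoly k z)
         = of_nat (n + 1) * (\<Sum>k=1..n. (-1) ^ k * bernpoly k y / of_nat k * bernpoly (n - k) z)
           + (1 - harm n) * of_nat (n + 1) * bernpoly n z"
proof -
  have Ffun: "(\<lambda>r. r * SB n (of_nat n + 1 - r) (-1) x y + (of_nat n + 1 - r) * SB n (-1) r y z
       + (-1) * SB n r (of_nat n + 1 - r) z x) = (\<lambda>r. 0)"
  proof (rule ext)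
    fix r :: complex
    have "SP n r (of_nat n + 1 - r) (-1) x y z = 0"
      by (rule SP_zero[OF _ xyz]) simp
    then show "r * SB n (of_nat n + 1 - r) (-1) x y + (of_nat n + 1 - r) * SB n (-1) r y z
       + (-1) * SB n r (of_nat n + 1 - r) z x = 0"
      unfolding SP_def by simp
  qed
  have da: "((\<lambda>r. of_nat n + 1 - r) has_field_derivative -1) (at (0::complex))"
    by (auto intro!: derivative_eq_intros)
  note dG = SS_param_deriv[where P=bernpoly and Q=bernpoly and n=n and u=x and v=y, OF da DERIV_const]
  note dH = SS_param_deriv[where P=bernpoly and Q=bernpoly and n=n and u=y and v=z, OF DERIV_const DERIV_ident]
  note dK = SS_param_deriv[where P=bernpoly and Q=bernpoly and n=n and u=z and v=x, OF DERIV_ident da]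
  note dF0 = DERIV_add[OF DERIV_add[OF DERIV_mult'[OF DERIV_ident dG] DERIV_mult'[OF da dH]] DERIV_cmult[OF dK]]
  have dF: "((\<lambda>r. r * SB n (of_nat n + 1 - r) (-1) x y + (of_nat n + 1 - r) * SB n (-1) r y z
       + (-1) * SB n r (of_nat n + 1 - r) z x) has_field_derivative
     (SB n (of_nat (Suc n)) (-1) x y
      + (of_nat (Suc n) * (\<Sum>k\<le>n. (-1)^k * (((-1) gchoose k) * gbd (n-k) 0) * bernpoly (n - k) y * bernpoly k z)
         - SB n (-1) 0 y z)
      - (\<Sum>k\<le>n. (-1)^k * (gbd k 0 * (of_nat (Suc n) gchoose (n-k)) - (0 gchoose k) * gbd (n-k) (of_nat (Suc n))) * bernpoly (n-k) z * bernpoly k x)))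
     (at 0)"
    by (rule DERIV_cong[OF dF0]) (simp add: algebra_simps)
  have dZ: "((\<lambda>r. r * SB n (of_nat n + 1 - r) (-1) x y + (of_nat n + 1 - r) * SB n (-1) r y z
       + (-1) * SB n r (of_nat n + 1 - r) z x) has_field_derivative 0) (at 0)"
    unfolding Ffun by (rule DERIV_const)
  have D0: "SB n (of_nat (Suc n)) (-1) x y
      + (of_nat (Suc n) * (\<Sum>k\<le>n. (-1)^k * (((-1) gchoose k) * gbd (n-k) 0) * bernpoly (n - k) y * bernpoly k z)
         - SB n (-1) 0 y z)
      - (\<Sum>k\<le>n. (-1)^k * (gbd k 0 * (of_nat (Suc n) gchoose (n-k)) - (0 gchoose k) * gbd (n-k) (of_nat (Suc n))) * bernpoly (n-k) z * bernpoly k x) = 0"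
    by (rule DERIV_unique[OF dF dZ])
  have G1: "SB n (of_nat (Suc n)) (-1) x y = (-1) ^ n * (\<Sum>k\<le>n. of_nat ((n + 1) choose k) * bernpoly (n - k) x * bernpoly k y)"
    unfolding SS_m1b binomial_gbinomial[symmetric] by simp
  have H0: "SB n (-1) 0 y z = bernpoly n z"
  proof -
    have "SB n (-1) 0 y z = (\<Sum>k\<le>n. if k = n then bernpoly n z else 0)"
      unfolding SS_m1a by (rule sum.cong) (auto simp: gchoose_0 bernpoly_0)
    then show ?thesis by simp
  qed
  have hn: "gbd n (of_nat (Suc n)) = of_nat (Suc n) * (harm (Suc n) - 1)"
    using gbd_nat[of n "Suc n"] by (simp add: harm_def)
  have T2: "(\<Sum>k\<le>n - 1. of_nat ((n + 1) choose k) * bernpoly (n - k) x / of_nat (n - k) * bernpoly k z)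
      = (\<Sum>k=1..n. of_nat (Suc n choose (n-k)) * bernpoly k x / of_nat k * bernpoly (n-k) z)"
    unfolding sum_reflect1[OF n] by (rule sum.cong) auto
  have hs: "harm (Suc n) = harm n + inverse (of_nat (Suc n) :: complex)" by (rule harm_Suc)
  have ne: "(of_nat (Suc n) :: complex) \<noteq> 0" by (simp only: of_nat_eq_0_iff)
  from D0 have E: "(-1) ^ n * (\<Sum>k\<le>n. of_nat ((n + 1) choose k) * bernpoly (n - k) x * bernpoly k y)
      + (\<Sum>k=1..n. of_nat (Suc n choose (n-k)) * bernpoly k x / of_nat k * bernpoly (n-k) z)
      = of_nat (Suc n) * (\<Sum>k=1..n. (-1) ^ k * bernpoly k y / of_nat k * bernpoly (n - k) z)
        + bernpoly n z - of_nat (Suc n) * (harm (Suc n) - 1) * bernpoly n z"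
    unfolding G1 H0 sumH sumK hn by (simp add: bernpoly_0 algebra_simps)
  have "bernpoly n z - of_nat (Suc n) * (harm (Suc n) - 1) * bernpoly n z = (1 - harm n) * of_nat (n + 1) * bernpoly n z"
    unfolding hs using ne by (simp add: field_simps)
  with E show ?thesis unfolding T2 by simp
qed


theorem corollary1p4:
  fixes n :: nat and x y z :: complex
  assumes "n \<ge> 1" and "x + y + z = 1"
  shows "((\<Sum>k\<le>n. of_nat ((n + 1) choose k) * ((-1) ^ n * bernpoly k x - bernpoly k y) * eulpoly (n - k) z)
           = of_nat (n + 1) / 2 * (\<Sum>l\<le>n - 1. (-1) ^ l * eulpoly l x * eulpoly (n - 1 - l) y))
     \<and> ((\<Sum>k=1..n. of_nat (n choose k) * bernpoly k x / of_nat k * eulpoly (n - k) z)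
           - (\<Sum>k=1..n. (-1) ^ k * bernpoly k y / of_nat k * eulpoly (n - k) z)
         = (-1) ^ n / 2 * (\<Sum>l\<le>n - 1. of_nat (n choose l) * eulpoly l y * eulpoly (n - 1 - l) x)
           - harm n * eulpoly n z)
     \<and> ((-1) ^ n * (\<Sum>k\<le>n. of_nat ((n + 1) choose k) * bernpoly (n - k) x * bernpoly k y)
           + (\<Sum>k\<le>n - 1. of_nat ((n + 1) choose k) * bernpoly (n - k) x / of_nat (n - k) * bernpoly k z)
         = of_nat (n + 1) * (\<Sum>k=1..n. (-1) ^ k * bernpoly k y / of_nat k * bernpoly (n - k) z)
           + (1 - harm n) * of_nat (n + 1) * bernpoly n z)"
  using ident1[OF assms] ident2[OF assms] ident3[OF assms] by blast

end
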